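(* For every $F\in\mathbb{N}^d$, $N(F)\le\sqrt{3}^{\,\|F\|}$.
   Context: $\mathbb{N}=\{0,1,2,\dots\}$. A GNS is a submonoid $S\subseteq\mathbb{N}^d$ with finite complement $\mathcal{H}(S)=\mathbb{N}^d\setminus S$. A Frobenius GNS with Frobenius gap $F$ is a GNS such that $F$ is the unique maximal element of $\mathcal{H}(S)$ for the natural partial order. $N(F)$ is the number of Frobenius GNS $S\subseteq\mathbb{N}^d$ with Frobenius gap $F$. $\|F\|=\prod_{i=1}^d(F^{(i)}+1)$. *)

theory Defs
  imports Complex_Main
begin

definition NN :: "nat \<Rightarrow> nat list set" where
  "NN d = {x. length x = d}"

definition vzero :: "nat \<Rightarrow> nat list" where
  "vzero d = replicate d 0"

definition vadd :: "nat list \<Rightarrow> nat list \<Rightarrow> nat list" where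
  "vadd x y = map2 (+) x y"

definition vle :: "nat list \<Rightarrow> nat list \<Rightarrow> bool" where
  "vle x y \<longleftrightarrow> length x = length y \<and> (\<forall>i < length x. x ! i \<le> y ! i)"

definition submonoid :: "nat \<Rightarrow> nat list set \<Rightarrow> bool" where
  "submonoid d S \<longleftrightarrow> S \<subseteq> NN d \<and> vzero d \<in> S \<and> (\<forall>x\<in>S. \<forall>y\<in>S. vadd x y \<in> S)"

definition gaps :: "nat \<Rightarrow> nat list set \<Rightarrow> nat list set" where
  "gaps d S = NN d - S"

definition GNS :: "nat \<Rightarrow> nat list set \<Rightarrow> bool" where
  "GNS d S \<longleftrightarrow> submonoid d S \<and> finite (gaps d S)"

definition is_maximal :: "nat list set \<Rightarrow> nat list \<Rightarrow> bool" where
  "is_maximal A x \<longleftrightarrow> x \<in> A \<and> (\<forall>y\<in>A. vle x y \<longrightarrow> y = x)"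

definition Frobenius_GNS :: "nat \<Rightarrow> nat list set \<Rightarrow> nat list \<Rightarrow> bool" where
  "Frobenius_GNS d S F \<longleftrightarrow> GNS d S \<and> is_maximal (gaps d S) F \<and>
     (\<forall>G. is_maximal (gaps d S) G \<longrightarrow> G = F)"

definition N_Frob :: "nat \<Rightarrow> nat list \<Rightarrow> nat" where
  "N_Frob d F = card {S. Frobenius_GNS d S F}"

definition boxnorm :: "nat list \<Rightarrow> nat" where
  "boxnorm F = (\<Prod>i<length F. F ! i + 1)"

end

theory Submission
  imports Defs
begin

definition fam :: "('a \<Rightarrow> 'a) \<Rightarrow> 'a set \<Rightarrow> 'a set set" where
  "fam \<sigma> A = {T. T \<subseteq> A \<and> (\<forall>x\<in>T. \<sigma> x \<notin> T)}"

lemma fam_finite: "finite A \<Longrightarrow> finite (fam \<sigma> A)"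
  unfolding fam_def by (rule finite_subset[of _ "Pow A"]) auto

lemma count_inv:
  assumes "finite A" "\<forall>x\<in>A. \<sigma> x \<in> A \<and> \<sigma> (\<sigma> x) = x"
  shows "real (card (fam \<sigma> A)) \<le> sqrt 3 ^ card A"
  using assms
proof (induction "card A" arbitrary: A rule: less_induct)
  case less
  have s1: "1 \<le> sqrt (3::real)" by simp
  show ?case
  proof (cases "A = {}")
    case True
    then have "fam \<sigma> A = {{}}" unfolding fam_def by auto
    then show ?thesis using True by simp
  next
    case False
    then obtain x where x: "x \<in> A" by blast
    show ?thesis
    proof (cases "\<sigma> x = x")
      case True
      let ?A = "A - {x}"
      have eq: "fam \<sigma> A = fam \<sigma> ?A" unfolding fam_def using True by auto
      have c: "card ?A < card A" using x less.prems(1) by (meson card_Diff1_less)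
      have inv: "\<forall>y\<in>?A. \<sigma> y \<in> ?A \<and> \<sigma> (\<sigma> y) = y" using less.prems(2) True by auto
      have "real (card (fam \<sigma> ?A)) \<le> sqrt 3 ^ card ?A"
        using less.hyps[OF c _ inv] less.prems(1) by simp
      also have "\<dots> \<le> sqrt 3 ^ card A" using c by (intro power_increasing) auto
      finally show ?thesis using eq by simp
    next
      case False
      let ?A = "A - {x, \<sigma> x}"
      have sx: "\<sigma> x \<in> A" using less.prems(2) x by blast
      have cA: "card ?A = card A - 2" using x sx False less.prems(1)
        by (simp add: card_Diff_subset)
      have cA2: "card A \<ge> 2"
      proof -
        have "card {x, \<sigma> x} \<le> card A" using x sx less.prems(1) by (intro card_mono) auto
        then show ?thesis using False by simp
      qed
      have c: "card ?A < card A" using cA cA2 by simp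
      have inv: "\<forall>y\<in>?A. \<sigma> y \<in> ?A \<and> \<sigma> (\<sigma> y) = y" using less.prems(2) x by auto metis+
      have IH: "real (card (fam \<sigma> ?A)) \<le> sqrt 3 ^ card ?A"
        using less.hyps[OF c _ inv] less.prems(1) by simp
      have sub: "fam \<sigma> A \<subseteq> (\<lambda>(T,U). T \<union> U) ` (fam \<sigma> ?A \<times> {{}, {x}, {\<sigma> x}})"
      proof
        fix T assume T: "T \<in> fam \<sigma> A"
        have "T \<inter> ?A \<in> fam \<sigma> ?A" using T unfolding fam_def by auto
        moreover have "T - ?A \<in> {{}, {x}, {\<sigma> x}}"
        proof -
          have "T - ?A \<subseteq> {x, \<sigma> x}" using T unfolding fam_def by auto
          moreover have "\<not> (x \<in> T \<and> \<sigma> x \<in> T)" using T unfolding fam_def by auto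
          ultimately show ?thesis by auto
        qed
        moreover have "T = (T \<inter> ?A) \<union> (T - ?A)" by auto
        ultimately show "T \<in> (\<lambda>(T,U). T \<union> U) ` (fam \<sigma> ?A \<times> {{}, {x}, {\<sigma> x}})"
          by (intro image_eqI[of _ _ "(T \<inter> ?A, T - ?A)"]) auto
      qed
      have fin: "finite (fam \<sigma> ?A \<times> {{}, {x}, {\<sigma> x}})"
        using fam_finite less.prems(1) by blast
      have "card (fam \<sigma> A) \<le> card ((\<lambda>(T,U). T \<union> U) ` (fam \<sigma> ?A \<times> {{}, {x}, {\<sigma> x}}))"
        by (rule card_mono[OF finite_imageI[OF fin] sub])
      also have "\<dots> \<le> card (fam \<sigma> ?A \<times> {{}, {x}, {\<sigma> x}})" by (rule card_image_le[OF fin])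
      also have "\<dots> \<le> card (fam \<sigma> ?A) * 3"
        by (simp add: card_cartesian_product card_insert_if)
      finally have "real (card (fam \<sigma> A)) \<le> real (card (fam \<sigma> ?A)) * 3" by linarith
      also have "\<dots> \<le> sqrt 3 ^ card ?A * 3" using IH by simp
      also have "\<dots> = sqrt 3 ^ card A"
      proof -
        have "card A = card ?A + 2" using cA cA2 by simp
        then show ?thesis by (simp add: power_add)
      qed
      finally show ?thesis .
    qed
  qed
qed


lemma vle_all2: "vle x y \<longleftrightarrow> list_all2 (\<le>) x y"
  unfolding vle_def by (simp add: list_all2_conv_all_nth)

lemma vle_trans: "vle x y \<Longrightarrow> vle y z \<Longrightarrow> vle x z"
  unfolding vle_def by (metis order_trans)

lemma vle_sum: "list_all2 (\<le>) x y \<Longrightarrow> sum_list x \<le> (sum_list y :: nat)"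
  by (induction rule: list_all2_induct) auto

lemma vle_sum_eq: "list_all2 (\<le>) x y \<Longrightarrow> sum_list y \<le> (sum_list x :: nat) \<Longrightarrow> x = y"
proof (induction rule: list_all2_induct)
  case Nil then show ?case by simp
next
  case (Cons a as b bs)
  have "sum_list as \<le> sum_list bs" using Cons.hyps(2) by (rule vle_sum)
  then have "b = a" "sum_list bs \<le> sum_list as" using Cons by auto
  then show ?case using Cons by simp
qed

definition box :: "nat list \<Rightarrow> nat list set" where
  "box F = {x. vle x F}"

lemma box_Cons: "box (a # F) = (\<lambda>(h,t). h # t) ` ({0..a} \<times> box F)"
proof -
  have "\<And>x. vle x (a # F) \<longleftrightarrow> (\<exists>h t. x = h # t \<and> h \<le> a \<and> vle t F)"
    unfolding vle_all2 by (auto simp: list_all2_Cons2)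
  then show ?thesis unfolding box_def by auto
qed

lemma box_card: "finite (box F) \<and> card (box F) = boxnorm F"
proof (induction F)
  case Nil
  have "box [] = {[]}" unfolding box_def vle_def by auto
  then show ?case by (simp add: boxnorm_def)
next
  case (Cons a F)
  have inj: "inj_on (\<lambda>(h,t). h # t) ({0..a} \<times> box F)" by (auto simp: inj_on_def)
  have "card (box (a # F)) = (a+1) * card (box F)"
    unfolding box_Cons by (simp add: card_image[OF inj] card_cartesian_product)
  moreover have "boxnorm (a # F) = (a+1) * boxnorm F"
  proof -
    have "(\<Prod>i<Suc (length F). (a#F)!i + 1) = ((a#F)!0 + 1) * (\<Prod>i<length F. (a#F)!(Suc i) + 1)"
      by (rule prod.lessThan_Suc_shift)
    then show ?thesis unfolding boxnorm_def by simp
  qed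
  ultimately show ?case using Cons by (simp add: box_Cons)
qed

definition refl_F :: "nat list \<Rightarrow> nat list \<Rightarrow> nat list" where
  "refl_F F x = map2 (-) F x"

lemma refl_props:
  assumes "x \<in> box F"
  shows "refl_F F x \<in> box F" "refl_F F (refl_F F x) = x" "vadd x (refl_F F x) = F"
  using assms unfolding box_def vle_def refl_F_def vadd_def
  by (auto intro!: nth_equalityI)

lemma gap_le_F:
  assumes fr: "Frobenius_GNS d S F" and g: "g \<in> gaps d S"
  shows "vle g F"
proof -
  have fin: "finite (gaps d S)" using fr unfolding Frobenius_GNS_def GNS_def by simp
  let ?C = "{z \<in> gaps d S. vle g z}"
  have finC: "finite ?C" using fin by simp
  have gC: "g \<in> ?C" using g unfolding vle_def by auto
  define M where "M = Max (sum_list ` ?C)"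
  have "M \<in> sum_list ` ?C" unfolding M_def using finC gC by (intro Max_in) auto
  then obtain m where m: "m \<in> ?C" "sum_list m = M" by auto
  have "is_maximal (gaps d S) m"
    unfolding is_maximal_def
  proof (intro conjI ballI impI)
    show "m \<in> gaps d S" using m by simp
    fix y assume y: "y \<in> gaps d S" "vle m y"
    then have "y \<in> ?C" using m vle_trans by blast
    then have "sum_list y \<le> M" unfolding M_def using finC by simp
    then show "y = m" using vle_sum_eq[of m y] y(2) m(2) unfolding vle_all2 by simp
  qed
  then have "m = F" using fr unfolding Frobenius_GNS_def by blast
  then show ?thesis using m by simp
qed

theorem lemma6p1:
  fixes d :: nat and F :: "nat list"
  assumes "F \<in> NN d"
  shows "real (N_Frob d F) \<le> sqrt 3 ^ boxnorm F"
proof -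
  have dF: "length F = d" using assms unfolding NN_def by simp
  let ?B = "box F"
  let ?\<sigma> = "refl_F F"
  have BN: "?B \<subseteq> NN d" using dF unfolding box_def vle_def NN_def by auto
  have key: "\<And>S. Frobenius_GNS d S F \<Longrightarrow> NN d - ?B \<subseteq> S"
    using gap_le_F unfolding gaps_def box_def by blast
  have Sin: "\<And>S. Frobenius_GNS d S F \<Longrightarrow> S \<subseteq> NN d"
    unfolding Frobenius_GNS_def GNS_def submonoid_def by blast
  have inj: "inj_on (\<lambda>S. S \<inter> ?B) {S. Frobenius_GNS d S F}"
  proof (rule inj_onI)
    fix S1 S2 assume a: "S1 \<in> {S. Frobenius_GNS d S F}" "S2 \<in> {S. Frobenius_GNS d S F}"
      and e: "S1 \<inter> ?B = S2 \<inter> ?B"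
    have "S1 = (NN d - ?B) \<union> (S1 \<inter> ?B)" using key[of S1] Sin[of S1] a BN by auto
    moreover have "S2 = (NN d - ?B) \<union> (S2 \<inter> ?B)" using key[of S2] Sin[of S2] a BN by auto
    ultimately show "S1 = S2" using e by simp
  qed
  have img: "(\<lambda>S. S \<inter> ?B) ` {S. Frobenius_GNS d S F} \<subseteq> fam ?\<sigma> ?B"
  proof
    fix T assume "T \<in> (\<lambda>S. S \<inter> ?B) ` {S. Frobenius_GNS d S F}"
    then obtain S where S: "Frobenius_GNS d S F" "T = S \<inter> ?B" by auto
    have Fg: "F \<in> gaps d S" using S(1) unfolding Frobenius_GNS_def is_maximal_def by blast
    have cl: "\<forall>x\<in>S. \<forall>y\<in>S. vadd x y \<in> S" using S(1) unfolding Frobenius_GNS_def GNS_def submonoid_def by blast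
    have "\<forall>x\<in>T. ?\<sigma> x \<notin> T"
    proof (intro ballI notI)
      fix x assume x: "x \<in> T" "?\<sigma> x \<in> T"
      then have "vadd x (?\<sigma> x) \<in> S" using cl S(2) by blast
      then have "F \<in> S" using refl_props(3)[of x F] x S(2) by simp
      then show False using Fg unfolding gaps_def by blast
    qed
    then show "T \<in> fam ?\<sigma> ?B" unfolding fam_def using S(2) by blast
  qed
  have finB: "finite ?B" using box_card by blast
  have "N_Frob d F \<le> card (fam ?\<sigma> ?B)"
    unfolding N_Frob_def by (rule card_inj_on_le[OF inj img fam_finite[OF finB]])
  then have "real (N_Frob d F) \<le> real (card (fam ?\<sigma> ?B))" by simp
  also have "\<dots> \<le> sqrt 3 ^ card ?B"
    by (rule count_inv[OF finB]) (auto intro: refl_props)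
  also have "card ?B = boxnorm F" using box_card by blast
  finally show ?thesis .
qed

end
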